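(* For all $t\geq 0$, \[ F_\alpha(t) = E\left(\frac{1}{1+Q_\alpha/t}\right) \geq \max\left\{\frac{1/2}{1+1/t},\ \frac{1+(1/t-3)\mathbf{Pr}(Q_\alpha\leq t)/2}{1+1/t}\right\}. \] In particular, when $t\leq 1/3$, $F_\alpha(t) \geq \frac{1}{1+1/t}$. In addition, for any fixed $t\geq 0$, $\lim_{\alpha\rightarrow 0} F_\alpha(t) = \frac{1}{1+1/t}$.
   Context: Let $S(\alpha,1)$ denote the symmetric $\alpha$-stable distribution with unit scale, i.e. with characteristic function $E(e^{\sqrt{-1}Zt}) = e^{-|t|^\alpha}$, $0<\alpha<1$. Such a variable can be generated (Chambers–Mallows–Stuck procedure) from independent $w\sim \exp(1)$ and $u\sim \mathrm{unif}(-\pi/2,\pi/2)$ as $Z = \frac{\sin(\alpha u)}{(\cos u)^{1/\alpha}}\Big[\frac{\cos(u-\alpha u)}{w}\Big]^{(1-\alpha)/\alpha}$. Let $S_1,S_2$ be i.i.d. $S(\alpha,1)$ generated this way from independent $(w_1,u_1)$ and $(w_2,u_2)$. Define $F_\alpha(t) = \mathbf{Pr}\left(|S_2/S_1|^{\alpha/(1-\alpha)}\leq t\right)$ for $t\geq 0$. Then $|S_2/S_1|^{\alpha/(1-\alpha)} = Q_\alpha \frac{w_1}{w_2}$, where $Q_\alpha = Q_\alpha(u_1,u_2) = \left|\frac{q_\alpha(u_2)}{q_\alpha(u_1)}\right|^{\alpha/(1-\alpha)}$ and $q_\alpha(u) = \frac{\sin(\alpha u)}{\cos^{1/\alpha}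 u}\left[\cos(u-\alpha u)\right]^{(1-\alpha)/\alpha}$. *)

theory Defs
  imports "HOL-Probability.Probability"
begin

definition Unif :: "real measure" where
  "Unif = uniform_measure lborel {-(pi/2)<..<pi/2}"

definition Expo :: "real measure" where
  "Expo = density lborel (exponential_density 1)"

text \<open>Chambers--Mallows--Stuck generator Z(w,u) for S(alpha,1).\<close>
definition CMS :: "real \<Rightarrow> real \<Rightarrow> real \<Rightarrow> real" where
  "CMS \<alpha> w u = sin (\<alpha> * u) / (cos u) powr (1 / \<alpha>)
      * (cos (u - \<alpha> * u) / w) powr ((1 - \<alpha>) / \<alpha>)"

definition Omega :: "((real \<times> real) \<times> (real \<times> real)) measure" where
  "Omega = (Expo \<Otimes>\<^sub>M Unif) \<Otimes>\<^sub>M (Expo \<Otimes>\<^sub>M Unif)"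

definition F :: "real \<Rightarrow> real \<Rightarrow> real" where
  "F \<alpha> t = measure Omega
     {\<omega> \<in> space Omega.
        \<bar>CMS \<alpha> (fst (snd \<omega>)) (snd (snd \<omega>)) / CMS \<alpha> (fst (fst \<omega>)) (snd (fst \<omega>))\<bar>
          powr (\<alpha> / (1 - \<alpha>)) \<le> t}"

definition q :: "real \<Rightarrow> real \<Rightarrow> real" where
  "q \<alpha> u = sin (\<alpha> * u) / (cos u) powr (1 / \<alpha>)
      * (cos (u - \<alpha> * u)) powr ((1 - \<alpha>) / \<alpha>)"

definition Q :: "real \<Rightarrow> real \<Rightarrow> real \<Rightarrow> real" where
  "Q \<alpha> u1 u2 = \<bar>q \<alpha> u2 / q \<alpha> u1\<bar> powr (\<alpha> / (1 - \<alpha>))"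

definition UU :: "(real \<times> real) measure" where
  "UU = Unif \<Otimes>\<^sub>M Unif"

end

theory Submission
  imports Defs "HOL-Real_Asymp.Real_Asymp"
begin


lemma ps_Expo: "prob_space Expo"
  unfolding Expo_def by (rule prob_space_exponential_density) simp

lemma sets_Expo[simp, measurable_cong]: "sets Expo = sets borel"
  unfolding Expo_def by simp
lemma space_Expo[simp]: "space Expo = UNIV"
  unfolding Expo_def by simp

lemma ps_Unif: "prob_space Unif"
  unfolding Unif_def by (rule prob_space_uniform_measure) auto
lemma sets_Unif[simp, measurable_cong]: "sets Unif = sets borel"
  unfolding Unif_def by simp
lemma space_Unif[simp]: "space Unif = UNIV"
  unfolding Unif_def by simp

lemma Expo_le: "0 \<le> a \<Longrightarrow> measure Expo {..a} = 1 - exp (-a)"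
proof -
  assume a: "0 \<le> a"
  have "emeasure Expo {..a} = ennreal (1 - exp (-a))"
    unfolding Expo_def using a by (simp add: emeasure_erlang_density erlang_CDF_def)
  then show ?thesis unfolding measure_def using a by simp
qed

lemma Expo_gt: "0 \<le> a \<Longrightarrow> emeasure Expo {a<..} = ennreal (exp (-a))"
proof -
  assume a: "0 \<le> a"
  interpret prob_space Expo by (rule ps_Expo)
  have "{a<..} = space Expo - {..a}" by auto
  then have "measure Expo {a<..} = 1 - measure Expo {..a}"
    using prob_compl[of "{..a}"] by simp
  then show ?thesis using Expo_le[OF a] by (simp add: emeasure_eq_measure)
qed

lemma AE_Expo: "AE w in Expo. 0 < w \<and> w \<noteq> c"
proof -
  have "AE w in lborel. w \<noteq> 0 \<and> w \<noteq> c"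
    using AE_lborel_singleton[of 0] AE_lborel_singleton[of c] by eventually_elim auto
  then show ?thesis unfolding Expo_def
    apply (subst AE_density)
     apply simp
    apply (erule eventually_mono)
    apply (auto simp: exponential_density_def)
    done
qed

lemma AE_Unif: "AE u in Unif. u \<in> {-(pi/2)<..<pi/2} \<and> u \<noteq> 0"
  unfolding Unif_def
  by (rule AE_uniform_measureI) (auto intro!: eventually_mono[OF AE_lborel_singleton[of 0]])

lemma Expo_laplace: "0 \<le> c \<Longrightarrow> (\<integral>\<^sup>+ w. ennreal (exp (- c * w)) \<partial>Expo) = ennreal (1 / (1 + c))"
proof -
  assume c: "0 \<le> c"
  interpret P: prob_space "density lborel (exponential_density (1+c))"
    by (rule prob_space_exponential_density) (use c in simp)
  have "1 = emeasure (density lborel (exponential_density (1+c))) UNIV"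
    using P.emeasure_space_1 by simp
  also have "\<dots> = (\<integral>\<^sup>+ x. ennreal (exponential_density (1+c) x) \<partial>lborel)"
    by (simp add: emeasure_density)
  also have "\<dots> = (\<integral>\<^sup>+ x. ennreal (1+c) * (ennreal (exponential_density 1 x) * ennreal (exp (- c * x))) \<partial>lborel)"
    by (intro nn_integral_cong) (use c in \<open>auto simp: exponential_density_def ennreal_mult'[symmetric] mult_exp_exp algebra_simps\<close>)
  also have "\<dots> = ennreal (1+c) * (\<integral>\<^sup>+ w. ennreal (exp (- c * w)) \<partial>Expo)"
    unfolding Expo_def by (subst nn_integral_cmult) (auto simp: nn_integral_density)
  finally have "ennreal (1+c) * (\<integral>\<^sup>+ w. ennreal (exp (- c * w)) \<partial>Expo) = 1" by simp
  then have "ennreal (1/(1+c)) * (ennreal (1+c) * (\<integral>\<^sup>+ w. ennreal (exp (- c * w)) \<partial>Expo)) = ennreal (1/(1+c))"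
    by simp
  also have "ennreal (1/(1+c)) * (ennreal (1+c) * (\<integral>\<^sup>+ w. ennreal (exp (- c * w)) \<partial>Expo))
     = ennreal (1/(1+c) * (1+c)) * (\<integral>\<^sup>+ w. ennreal (exp (- c * w)) \<partial>Expo)"
    apply (subst ennreal_mult')
     apply (use c in simp)
    apply (rule mult.assoc[symmetric])
    done
  finally show ?thesis using c by simp
qed




lemma cos_pos_I: "u \<in> {-(pi/2)<..<pi/2} \<Longrightarrow> 0 < cos u"
  by (auto intro!: cos_gt_zero_pi)

lemma cos_pos_I2: "0 < \<alpha> \<Longrightarrow> \<alpha> < 1 \<Longrightarrow> u \<in> {-(pi/2)<..<pi/2} \<Longrightarrow> 0 < cos (u - \<alpha> * u)"
proof -
  assume a: "0 < \<alpha>" "\<alpha> < 1" and u: "u \<in> {-(pi/2)<..<pi/2}"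
  have "u - \<alpha> * u = (1 - \<alpha>) * u" by (simp add: algebra_simps)
  moreover have "\<bar>(1 - \<alpha>) * u\<bar> < pi/2"
  proof -
    have "\<bar>(1 - \<alpha>) * u\<bar> = (1-\<alpha>) * \<bar>u\<bar>" using a by (simp add: abs_mult)
    also have "\<dots> \<le> \<bar>u\<bar>" by (rule mult_left_le_one_le) (use a in auto)
    finally show ?thesis using u by auto
  qed
  ultimately show ?thesis by (auto intro!: cos_gt_zero_pi)
qed

lemma sin_ne0: "0 < \<alpha> \<Longrightarrow> \<alpha> < 1 \<Longrightarrow> u \<in> {-(pi/2)<..<pi/2} \<Longrightarrow> u \<noteq> 0 \<Longrightarrow> sin (\<alpha> * u) \<noteq> 0"
proof -
  assume a: "0 < \<alpha>" "\<alpha> < 1" and u: "u \<in> {-(pi/2)<..<pi/2}" "u \<noteq> 0"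
  have "\<bar>\<alpha> * u\<bar> < pi" using a u
    by (auto simp: abs_mult intro!: order.strict_trans1[OF mult_left_le_one_le[of "\<bar>u\<bar>" \<alpha>]])
  moreover have "\<alpha> * u \<noteq> 0" using a u by auto
  ultimately show ?thesis using sin_zero_pi_iff by blast
qed

lemma q_ne0: "0 < \<alpha> \<Longrightarrow> \<alpha> < 1 \<Longrightarrow> u \<in> {-(pi/2)<..<pi/2} \<Longrightarrow> u \<noteq> 0 \<Longrightarrow> q \<alpha> u \<noteq> 0"
proof -
  assume h: "0 < \<alpha>" "\<alpha> < 1" "u \<in> {-(pi/2)<..<pi/2}" "u \<noteq> 0"
  have "sin (\<alpha> * u) \<noteq> 0" "0 < cos u" "0 < cos (u - \<alpha> * u)"
    using sin_ne0[OF h] cos_pos_I[OF h(3)] cos_pos_I2[OF h(1-3)] by auto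
  then show ?thesis by (simp add: q_def)
qed

lemma CMS_eq: "0 < \<alpha> \<Longrightarrow> \<alpha> < 1 \<Longrightarrow> u \<in> {-(pi/2)<..<pi/2} \<Longrightarrow> 0 < w \<Longrightarrow>
   CMS \<alpha> w u = q \<alpha> u / w powr ((1 - \<alpha>) / \<alpha>)"
  using cos_pos_I2[of \<alpha> u] by (simp add: CMS_def q_def powr_divide)

lemma ratio_eq:
  assumes a: "0 < \<alpha>" "\<alpha> < 1" and u: "u1 \<in> {-(pi/2)<..<pi/2}" "u2 \<in> {-(pi/2)<..<pi/2}"
    and w: "0 < w1" "0 < w2"
  shows "\<bar>CMS \<alpha> w2 u2 / CMS \<alpha> w1 u1\<bar> powr (\<alpha> / (1 - \<alpha>)) = Q \<alpha> u1 u2 * (w1 / w2)"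
proof -
  let ?b = "(1 - \<alpha>) / \<alpha>" and ?a = "\<alpha> / (1 - \<alpha>)"
  have "CMS \<alpha> w2 u2 / CMS \<alpha> w1 u1 = (q \<alpha> u2 / q \<alpha> u1) * (w1 powr ?b / w2 powr ?b)"
    unfolding CMS_eq[OF a u(1) w(1)] CMS_eq[OF a u(2) w(2)] using w by (simp add: field_simps)
  also have "w1 powr ?b / w2 powr ?b = (w1 / w2) powr ?b" using w by (simp add: powr_divide)
  finally have "\<bar>CMS \<alpha> w2 u2 / CMS \<alpha> w1 u1\<bar> = \<bar>q \<alpha> u2 / q \<alpha> u1\<bar> * (w1 / w2) powr ?b"
    by (simp add: abs_mult)
  then have "\<bar>CMS \<alpha> w2 u2 / CMS \<alpha> w1 u1\<bar> powr ?a = Q \<alpha> u1 u2 * ((w1 / w2) powr ?b) powr ?a"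
    unfolding Q_def by (simp add: powr_mult[symmetric] abs_mult)
  also have "((w1 / w2) powr ?b) powr ?a = w1 / w2"
    using a w by (simp add: powr_powr)
  finally show ?thesis .
qed

lemma Q_pos: "0 < \<alpha> \<Longrightarrow> \<alpha> < 1 \<Longrightarrow> u1 \<in> {-(pi/2)<..<pi/2} \<Longrightarrow> u1 \<noteq> 0 \<Longrightarrow>
   u2 \<in> {-(pi/2)<..<pi/2} \<Longrightarrow> u2 \<noteq> 0 \<Longrightarrow> 0 < Q \<alpha> u1 u2"
  using q_ne0[of \<alpha> u1] q_ne0[of \<alpha> u2] by (simp add: Q_def)

lemma Q_nonneg: "0 \<le> Q \<alpha> u1 u2" by (simp add: Q_def)

lemma Q_swap: "0 < \<alpha> \<Longrightarrow> \<alpha> < 1 \<Longrightarrow> u1 \<in> {-(pi/2)<..<pi/2} \<Longrightarrow> u1 \<noteq> 0 \<Longrightarrow>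
   u2 \<in> {-(pi/2)<..<pi/2} \<Longrightarrow> u2 \<noteq> 0 \<Longrightarrow> Q \<alpha> u2 u1 = 1 / Q \<alpha> u1 u2"
proof -
  assume h: "0 < \<alpha>" "\<alpha> < 1" "u1 \<in> {-(pi/2)<..<pi/2}" "u1 \<noteq> 0" "u2 \<in> {-(pi/2)<..<pi/2}" "u2 \<noteq> 0"
  have "\<bar>q \<alpha> u1 / q \<alpha> u2\<bar> = 1 / \<bar>q \<alpha> u2 / q \<alpha> u1\<bar>" by simp
  then show ?thesis unfolding Q_def
    using q_ne0[of \<alpha> u1] q_ne0[of \<alpha> u2] h by (simp add: powr_divide)
qed

lemma q_meas[measurable]: assumes [measurable]: "f \<in> borel_measurable M"
  shows "(\<lambda>x. q \<alpha> (f x)) \<in> borel_measurable M"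
  unfolding q_def by measurable
lemma Q_meas[measurable]: assumes [measurable]: "f \<in> borel_measurable M" "g \<in> borel_measurable M"
  shows "(\<lambda>x. Q \<alpha> (f x) (g x)) \<in> borel_measurable M"
  unfolding Q_def by measurable
lemma CMS_meas[measurable]: assumes [measurable]: "f \<in> borel_measurable M" "g \<in> borel_measurable M"
  shows "(\<lambda>x. CMS \<alpha> (f x) (g x)) \<in> borel_measurable M"
  unfolding CMS_def by measurable




interpretation EU: pair_prob_space Expo Unif
  by (intro pair_prob_space.intro pair_sigma_finite.intro ps_Expo ps_Unif prob_space_imp_sigma_finite)
     (intro pair_sigma_finite.intro prob_space_imp_sigma_finite ps_Expo ps_Unif)?

interpretation UU2: pair_prob_space Unif Unif
  by (intro pair_prob_space.intro pair_sigma_finite.intro ps_Unif prob_space_imp_sigma_finite)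

interpretation OM: pair_prob_space "Expo \<Otimes>\<^sub>M Unif" "Expo \<Otimes>\<^sub>M Unif"
  by (intro pair_prob_space.intro pair_sigma_finite.intro EU.prob_space_axioms prob_space_imp_sigma_finite)




definition R :: "real \<Rightarrow> real \<Rightarrow> real \<Rightarrow> real \<Rightarrow> real \<Rightarrow> real" where
  "R \<alpha> w1 u1 w2 u2 = \<bar>CMS \<alpha> w2 u2 / CMS \<alpha> w1 u1\<bar> powr (\<alpha> / (1 - \<alpha>))"

definition gg :: "real \<Rightarrow> real \<Rightarrow> real" where
  "gg t x = (if 0 < t then exp (- x / t) else 0)"

abbreviation II where "II \<equiv> {-(pi/2)<..<pi/2::real}"

lemma inner1:
  assumes a: "0 < \<alpha>" "\<alpha> < 1" and t: "0 \<le> t"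
    and u: "u1 \<in> II" "u1 \<noteq> 0" "u2 \<in> II" "u2 \<noteq> 0" and w1: "0 < w1"
  shows "(\<integral>\<^sup>+ w2. (if R \<alpha> w1 u1 w2 u2 \<le> t then 1 else 0) \<partial>Expo) = ennreal (gg t (Q \<alpha> u1 u2 * w1))"
proof -
  have Qp: "0 < Q \<alpha> u1 u2" using Q_pos[OF a u] .
  show ?thesis
  proof (cases "0 < t")
    case True
    define c where "c = Q \<alpha> u1 u2 * w1 / t"
    have c0: "0 \<le> c" using Qp w1 True by (simp add: c_def)
    have "(\<integral>\<^sup>+ w2. (if R \<alpha> w1 u1 w2 u2 \<le> t then 1 else 0) \<partial>Expo) = (\<integral>\<^sup>+ w2. indicator {c<..} w2 \<partial>Expo)"
    proof (rule nn_integral_cong_AE)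
      show "AE w2 in Expo. (if R \<alpha> w1 u1 w2 u2 \<le> t then 1 else 0) = (indicator {c<..} w2 :: ennreal)"
        using AE_Expo[of c]
      proof eventually_elim
        case (elim w2)
        then have w2: "0 < w2" "w2 \<noteq> c" by auto
        have "R \<alpha> w1 u1 w2 u2 = Q \<alpha> u1 u2 * (w1 / w2)"
          unfolding R_def using ratio_eq[OF a u(1) u(3) w1 w2(1)] .
        moreover have "Q \<alpha> u1 u2 * (w1 / w2) \<le> t \<longleftrightarrow> c \<le> w2"
          using w2 True by (simp add: c_def field_simps)
        ultimately show ?case using w2 by (auto simp: indicator_def)
      qed
    qed
    also have "\<dots> = ennreal (exp (- c))" using Expo_gt[OF c0] by simp
    finally show ?thesis using True by (simp add: gg_def c_def)
  next
    case False
    then have t0: "t = 0" using t by simp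
    have "(\<integral>\<^sup>+ w2. (if R \<alpha> w1 u1 w2 u2 \<le> t then 1 else 0) \<partial>Expo) = (\<integral>\<^sup>+ w2. 0 \<partial>Expo)"
    proof (rule nn_integral_cong_AE)
      show "AE w2 in Expo. (if R \<alpha> w1 u1 w2 u2 \<le> t then 1 else 0) = (0 :: ennreal)"
        using AE_Expo[of 0]
      proof eventually_elim
        case (elim w2)
        then have w2: "0 < w2" by auto
        have "R \<alpha> w1 u1 w2 u2 = Q \<alpha> u1 u2 * (w1 / w2)"
          unfolding R_def using ratio_eq[OF a u(1) u(3) w1 w2(1)] .
        moreover have "0 < Q \<alpha> u1 u2 * (w1 / w2)" using Qp w1 w2 by simp
        ultimately show ?case using t0 by auto
      qed
    qed
    then show ?thesis using t0 by (simp add: gg_def)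
  qed
qed

lemma inner2:
  assumes t: "0 \<le> t" and Q0: "0 \<le> Qv"
  shows "(\<integral>\<^sup>+ w1. ennreal (gg t (Qv * w1)) \<partial>Expo) = ennreal (t / (t + Qv))"
proof (cases "0 < t")
  case True
  have "(\<integral>\<^sup>+ w1. ennreal (gg t (Qv * w1)) \<partial>Expo) = (\<integral>\<^sup>+ w1. ennreal (exp (- (Qv/t) * w1)) \<partial>Expo)"
    using True by (intro nn_integral_cong) (simp add: gg_def)
  also have "\<dots> = ennreal (1 / (1 + Qv/t))" using True Q0 by (intro Expo_laplace) simp
  also have "1 / (1 + Qv/t) = t / (t + Qv)" using True Q0 by (simp add: field_simps)
  finally show ?thesis .
next
  case False
  then show ?thesis using t by (simp add: gg_def)
qed




lemma AE_Unif': "AE u in Unif. u \<in> II \<and> u \<noteq> 0" using AE_Unif by simp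

lemma F_integral:
  assumes a: "0 < \<alpha>" "\<alpha> < 1" and t: "0 \<le> t"
  shows "F \<alpha> t = (\<integral>p. t / (t + Q \<alpha> (fst p) (snd p)) \<partial>UU)"
proof -
  let ?H = "\<lambda>w1 u1 w2 u2. (if R \<alpha> w1 u1 w2 u2 \<le> t then 1 else 0 :: ennreal)"
  define S where "S = {\<omega> \<in> space Omega.
        \<bar>CMS \<alpha> (fst (snd \<omega>)) (snd (snd \<omega>)) / CMS \<alpha> (fst (fst \<omega>)) (snd (fst \<omega>))\<bar>
          powr (\<alpha> / (1 - \<alpha>)) \<le> t}"
  have S: "S \<in> sets Omega" unfolding S_def Omega_def by measurable
  have Hm: "(\<lambda>\<omega>. ?H (fst (fst \<omega>)) (snd (fst \<omega>)) (fst (snd \<omega>)) (snd (snd \<omega>))) \<in> borel_measurable Omega"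
    unfolding Omega_def R_def by measurable
  have "emeasure Omega S = (\<integral>\<^sup>+\<omega>. indicator S \<omega> \<partial>Omega)"
    using S by simp
  also have "\<dots> = (\<integral>\<^sup>+\<omega>. ?H (fst (fst \<omega>)) (snd (fst \<omega>)) (fst (snd \<omega>)) (snd (snd \<omega>)) \<partial>Omega)"
    by (intro nn_integral_cong) (auto simp: S_def R_def Omega_def space_pair_measure indicator_def)
  also have "\<dots> = (\<integral>\<^sup>+x. \<integral>\<^sup>+y. ?H (fst x) (snd x) (fst y) (snd y) \<partial>(Expo \<Otimes>\<^sub>M Unif) \<partial>(Expo \<Otimes>\<^sub>M Unif))"
    using sigma_finite_measure.nn_integral_fst[OF prob_space_imp_sigma_finite[OF EU.prob_space_axioms] Hm[unfolded Omega_def]] unfolding Omega_def by simp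
  also have "\<dots> = (\<integral>\<^sup>+x. \<integral>\<^sup>+u2. \<integral>\<^sup>+w2. ?H (fst x) (snd x) w2 u2 \<partial>Expo \<partial>Unif \<partial>(Expo \<Otimes>\<^sub>M Unif))"
    by (intro nn_integral_cong, subst EU.nn_integral_snd[symmetric]) (auto simp: R_def)
  also have "\<dots> = (\<integral>\<^sup>+u1. \<integral>\<^sup>+w1. \<integral>\<^sup>+u2. \<integral>\<^sup>+w2. ?H w1 u1 w2 u2 \<partial>Expo \<partial>Unif \<partial>Expo \<partial>Unif)"
    by (subst EU.nn_integral_snd[symmetric]) (auto simp: R_def)
  also have "\<dots> = (\<integral>\<^sup>+u1. \<integral>\<^sup>+u2. ennreal (t / (t + Q \<alpha> u1 u2)) \<partial>Unif \<partial>Unif)"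
  proof (rule nn_integral_cong_AE)
    show "AE u1 in Unif. (\<integral>\<^sup>+w1. \<integral>\<^sup>+u2. \<integral>\<^sup>+w2. ?H w1 u1 w2 u2 \<partial>Expo \<partial>Unif \<partial>Expo)
       = (\<integral>\<^sup>+u2. ennreal (t / (t + Q \<alpha> u1 u2)) \<partial>Unif)"
      using AE_Unif'
    proof eventually_elim
      case (elim u1)
      have "(\<integral>\<^sup>+w1. \<integral>\<^sup>+u2. \<integral>\<^sup>+w2. ?H w1 u1 w2 u2 \<partial>Expo \<partial>Unif \<partial>Expo)
          = (\<integral>\<^sup>+w1. \<integral>\<^sup>+u2. ennreal (gg t (Q \<alpha> u1 u2 * w1)) \<partial>Unif \<partial>Expo)"
      proof (rule nn_integral_cong_AE)
        show "AE w1 in Expo. (\<integral>\<^sup>+u2. \<integral>\<^sup>+w2. ?H w1 u1 w2 u2 \<partial>Expo \<partial>Unif)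
           = (\<integral>\<^sup>+u2. ennreal (gg t (Q \<alpha> u1 u2 * w1)) \<partial>Unif)"
          using AE_Expo[of 0]
        proof eventually_elim
          case (elim w1)
          show ?case
          proof (rule nn_integral_cong_AE)
            show "AE u2 in Unif. (\<integral>\<^sup>+w2. ?H w1 u1 w2 u2 \<partial>Expo) = ennreal (gg t (Q \<alpha> u1 u2 * w1))"
              using AE_Unif' by eventually_elim (use inner1[OF a t] elim \<open>u1 \<in> II \<and> u1 \<noteq> 0\<close> in auto)
          qed
        qed
      qed
      also have "\<dots> = (\<integral>\<^sup>+u2. \<integral>\<^sup>+w1. ennreal (gg t (Q \<alpha> u1 u2 * w1)) \<partial>Expo \<partial>Unif)"
        by (rule EU.Fubini'[symmetric]) (simp add: gg_def)
      also have "\<dots> = (\<integral>\<^sup>+u2. ennreal (t / (t + Q \<alpha> u1 u2)) \<partial>Unif)"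
        by (intro nn_integral_cong inner2[OF t Q_nonneg])
      finally show ?case .
    qed
  qed
  also have "\<dots> = (\<integral>\<^sup>+p. ennreal (t / (t + Q \<alpha> (fst p) (snd p))) \<partial>UU)"
    unfolding UU_def by (subst sigma_finite_measure.nn_integral_fst[OF prob_space_imp_sigma_finite[OF ps_Unif], symmetric]) auto
  finally have eq: "emeasure Omega S = (\<integral>\<^sup>+p. ennreal (t / (t + Q \<alpha> (fst p) (snd p))) \<partial>UU)" .
  have "F \<alpha> t = enn2real (emeasure Omega S)" unfolding F_def S_def measure_def ..
  also have "\<dots> = (\<integral>p. t / (t + Q \<alpha> (fst p) (snd p)) \<partial>UU)"
    unfolding eq by (rule enn2real_nn_integral_eq_integral) (use t Q_nonneg in \<open>auto simp: UU_def\<close>)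
  finally show ?thesis .
qed




lemma pw1:
  fixes x t :: real assumes x: "0 < x" and t: "0 \<le> t"
  shows "t / (t + 1) \<le> t / (t + x) + t / (t + 1 / x)"
proof (cases "x \<le> 1")
  case True
  have "t / (t + 1) \<le> t / (t + x)" using True x t by (intro divide_left_mono) auto
  moreover have "0 \<le> t / (t + 1 / x)" using x t by simp
  ultimately show ?thesis by linarith
next
  case False
  have "t / (t + 1) \<le> t / (t + 1/x)" using False x t by (intro divide_left_mono) (auto simp: field_simps add_pos_nonneg)
  moreover have "0 \<le> t / (t + x)" using x t by simp
  ultimately show ?thesis by linarith
qed

lemma eq_aux:
  fixes x t :: real assumes x: "0 < x" and tp: "0 < t"
  shows "t / (t + x) + t / (t + 1 / x) - 2 * t / (t + 1) = t * (1 - t) * (x - 1)^2 / ((t + x) * (t * x + 1) * (t + 1))"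
proof -
  have tx: "0 < t * x" using x tp by simp
  have a: "t / (t + 1 / x) = t * x / (t * x + 1)" 
  proof -
    have "t + 1 / x = (t * x + 1) / x" using x by (simp add: field_simps)
    then show ?thesis by simp
  qed
  have p: "t + x \<noteq> 0" "t * x + 1 \<noteq> 0" "t + 1 \<noteq> 0" using x tp tx by linarith+
  show ?thesis unfolding a using p
    by (simp add: divide_simps) (simp add: algebra_simps power2_eq_square)
qed

lemma pw2:
  fixes x t :: real assumes x: "0 < x" and t: "0 \<le> t"
  shows "2 * t \<le> (t + 1) * (t / (t + x) + t / (t + 1 / x))
     - (1 - 3 * t) / 2 * (of_bool (x \<le> t) + of_bool (1 / x \<le> t))"
proof (cases "t = 0")
  case True
  then show ?thesis using x by simp
next
  case False
  then have tp: "0 < t" using t by simp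
  have f0: "0 \<le> t / (t + x)" "0 \<le> t / (t + 1 / x)" using x t by auto
  show ?thesis
  proof (cases "x \<le> t")
    case xt: True
    have h1: "1/2 \<le> t / (t + x)" using xt tp x by (simp add: field_simps)
    show ?thesis
    proof (cases "1 / x \<le> t")
      case True
      have "1 \<le> t * t" using mult_mono[OF xt True] x t by (simp add: field_simps)
      then have "1 \<le> t"
      proof (rule contrapos_pp)
        assume "\<not> 1 \<le> t"
        then have "t * t < 1 * 1" using tp by (intro mult_strict_mono) auto
        then show "\<not> 1 \<le> t * t" by simp
      qed
      have "0 \<le> (t+1) * (t / (t + x) + t / (t + 1 / x))" using f0 tp by (intro mult_nonneg_nonneg) auto
      moreover have e: "of_bool (x \<le> t) + of_bool (1 / x \<le> t) = (2::real)" using xt True by simp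
      have gen: "\<And>A::real. 0 \<le> A \<Longrightarrow> 2*t \<le> A - (1-3*t)/2*2" using \<open>1 \<le> t\<close> by (simp add: field_simps)
      ultimately show ?thesis unfolding e by (intro gen)
    next
      case False
      have "(t+1) * (1/2) \<le> (t+1) * (t / (t + x) + t / (t + 1 / x))"
        by (rule mult_left_mono) (use h1 f0 tp in linarith)+
      moreover have e: "of_bool (x \<le> t) + of_bool (1 / x \<le> t) = (1::real)" using xt False by simp
      moreover have gen: "\<And>B::real. (t+1) * (1/2) \<le> B \<Longrightarrow> 2*t \<le> B - (1-3*t)/2*1" by (simp add: field_simps)
      ultimately show ?thesis by simp
    qed
  next
    case xt: False
    show ?thesis
    proof (cases "1 / x \<le> t")
      case True
      have h1: "1/2 \<le> t / (t + 1/x)" using True tp x by (simp add: field_simps)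
      have "(t+1) * (1/2) \<le> (t+1) * (t / (t + x) + t / (t + 1 / x))"
        by (rule mult_left_mono) (use h1 f0 tp in linarith)+
      moreover have e: "of_bool (x \<le> t) + of_bool (1 / x \<le> t) = (1::real)" using xt True by simp
      moreover have gen: "\<And>B::real. (t+1) * (1/2) \<le> B \<Longrightarrow> 2*t \<le> B - (1-3*t)/2*1" by (simp add: field_simps)
      ultimately show ?thesis by simp
    next
      case False
      have "t < 1"
      proof (rule ccontr)
        assume "\<not> t < 1"
        then have "1 \<le> t" by simp
        show False
        proof (cases "x \<le> 1")
          case True then show False using xt \<open>1 \<le> t\<close> by simp
        next
          case False then have "1/x \<le> 1" by simp
          then show False using \<open>\<not> 1/x \<le> t\<close> \<open>1 \<le> t\<close> by simp
        qed
      qed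
      have eq: "t / (t + x) + t / (t + 1 / x) - 2 * t / (t + 1) = t * (1 - t) * (x - 1)^2 / ((t + x) * (t * x + 1) * (t + 1))"
        using eq_aux[OF x tp] .
      have "0 \<le> t * (1 - t) * (x - 1)^2 / ((t + x) * (t * x + 1) * (t + 1))"
        using x tp \<open>t < 1\<close> by (intro divide_nonneg_pos mult_nonneg_nonneg mult_pos_pos add_pos_pos) auto
      then have "2 * t / (t + 1) \<le> t / (t + x) + t / (t + 1 / x)" using eq by linarith
      then have "(t + 1) * (2 * t / (t + 1)) \<le> (t + 1) * (t / (t + x) + t / (t + 1 / x))"
        using tp by (intro mult_left_mono) auto
      then show ?thesis using xt False tp by simp
    qed
  qed
qed




lemma space_UU[simp]: "space UU = UNIV" by (simp add: UU_def space_pair_measure)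
lemma sets_UU[measurable_cong]: "sets UU = sets (Unif \<Otimes>\<^sub>M Unif)" by (simp only: UU_def)

lemma ps_UU: "prob_space UU" unfolding UU_def by (rule UU2.prob_space_axioms)

lemma UU_swap:
  assumes h[measurable]: "h \<in> borel_measurable UU"
  shows "(\<integral>p. h (snd p, fst p) \<partial>UU) = (\<integral>p. (h p :: real) \<partial>UU)"
proof -
  have "UU = distr UU UU (\<lambda>(x, y). (y, x))"
    unfolding UU_def by (rule UU2.distr_pair_swap)
  then have "(\<integral>p. h p \<partial>UU) = (\<integral>p. h p \<partial>distr UU UU (\<lambda>(x, y). (y, x)))" by simp
  also have "\<dots> = (\<integral>p. h ((\<lambda>(x, y). (y, x)) p) \<partial>UU)"
    by (rule integral_distr) (auto simp: UU_def)
  finally show ?thesis by (simp add: case_prod_beta)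
qed

lemma AE_UU: "AE p in UU. fst p \<in> II \<and> fst p \<noteq> 0 \<and> snd p \<in> II \<and> snd p \<noteq> 0"
  unfolding UU_def
proof (rule UU2.AE_pair_measure)
  show "{x \<in> space (Unif \<Otimes>\<^sub>M Unif). fst x \<in> II \<and> fst x \<noteq> 0 \<and> snd x \<in> II \<and> snd x \<noteq> 0} \<in> sets (Unif \<Otimes>\<^sub>M Unif)"
    by measurable
  show "AE x in Unif. AE y in Unif. fst (x, y) \<in> II \<and> fst (x, y) \<noteq> 0 \<and> snd (x, y) \<in> II \<and> snd (x, y) \<noteq> 0"
    using AE_Unif'
  proof eventually_elim
    case (elim x)
    show ?case using AE_Unif' by eventually_elim (use elim in simp)
  qed
qed

lemma bounds:
  assumes a: "0 < \<alpha>" "\<alpha> < 1" and t: "0 \<le> t"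
  shows "F \<alpha> t \<ge> max ((1/2) * t / (t + 1))
          ((t + (1 - 3 * t) * measure UU {p \<in> space UU. Q \<alpha> (fst p) (snd p) \<le> t} / 2) / (t + 1))"
proof -
  interpret U: prob_space UU by (rule ps_UU)
  define A where "A = {p \<in> space UU. Q \<alpha> (fst p) (snd p) \<le> t}"
  define P where "P = measure UU A"
  let ?f = "\<lambda>p. t / (t + Q \<alpha> (fst p) (snd p))"
  let ?g = "\<lambda>p. t / (t + Q \<alpha> (snd p) (fst p))"
  let ?i = "\<lambda>p. indicat_real A p"
  let ?j = "\<lambda>p. indicat_real A (snd p, fst p)"
  have A[measurable]: "A \<in> sets UU" unfolding A_def UU_def by measurable
  have fm[measurable]: "?f \<in> borel_measurable UU" unfolding UU_def by measurable
  have gm[measurable]: "?g \<in> borel_measurable UU" unfolding UU_def by measurable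
  have im[measurable]: "?i \<in> borel_measurable UU" by measurable
  have jm[measurable]: "?j \<in> borel_measurable UU" unfolding UU_def by measurable
  have fb: "\<bar>?f p\<bar> \<le> 1" for p using t Q_nonneg[of \<alpha> "fst p" "snd p"]
    by (cases "t = 0") (auto simp: divide_le_eq_1)
  have gb: "\<bar>?g p\<bar> \<le> 1" for p using t Q_nonneg[of \<alpha> "snd p" "fst p"]
    by (cases "t = 0") (auto simp: divide_le_eq_1)
  have fi: "integrable UU ?f" by (rule U.integrable_const_bound[where B=1]) (use fb in auto)
  have gi: "integrable UU ?g" by (rule U.integrable_const_bound[where B=1]) (use gb in auto)
  have ii: "integrable UU ?i" by (rule U.integrable_const_bound[where B=1]) (auto simp: indicator_def)
  have ji: "integrable UU ?j" by (rule U.integrable_const_bound[where B=1]) (auto simp: indicator_def)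
  have m1: "measure UU UNIV = 1" using U.prob_space by simp
  have F: "F \<alpha> t = integral\<^sup>L UU ?f" by (rule F_integral[OF a t])
  have G: "integral\<^sup>L UU ?g = integral\<^sup>L UU ?f" using UU_swap[OF fm] by simp
  have I: "integral\<^sup>L UU ?i = P" unfolding P_def by simp
  have J: "integral\<^sup>L UU ?j = P" using UU_swap[OF im] I by simp
  have pw: "AE p in UU. 2 * t \<le> (t + 1) * (?f p + ?g p) - (1 - 3 * t) / 2 * (?i p + ?j p)
                  \<and> t / (t + 1) \<le> ?f p + ?g p"
    using AE_UU
  proof eventually_elim
    case (elim p)
    define x where "x = Q \<alpha> (fst p) (snd p)"
    have e: "fst p \<in> II" "fst p \<noteq> 0" "snd p \<in> II" "snd p \<noteq> 0" using elim by auto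
    have x0: "0 < x" unfolding x_def by (rule Q_pos[OF a e])
    have gx: "Q \<alpha> (snd p) (fst p) = 1 / x" unfolding x_def by (rule Q_swap[OF a e])
    have ix: "?i p = of_bool (x \<le> t)" by (simp add: A_def x_def indicator_def)
    have jx: "?j p = of_bool (1 / x \<le> t)" by (simp add: A_def gx indicator_def)
    show ?case unfolding ix jx gx x_def[symmetric] using pw2[OF x0 t] pw1[OF x0 t] by (intro conjI)
  qed
  have "integral\<^sup>L UU (\<lambda>p. 2 * t) \<le> integral\<^sup>L UU (\<lambda>p. (t + 1) * (?f p + ?g p) - (1 - 3 * t) / 2 * (?i p + ?j p))"
    by (rule integral_mono_AE) (use fi gi ii ji pw in \<open>auto elim: eventually_mono\<close>)
  also have "\<dots> = (t + 1) * (integral\<^sup>L UU ?f + integral\<^sup>L UU ?g) - (1 - 3 * t) / 2 * (integral\<^sup>L UU ?i + integral\<^sup>L UU ?j)"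
    using fi gi ii ji by (simp add: Bochner_Integration.integral_diff Bochner_Integration.integral_add)
  finally have b2: "2 * t \<le> (t + 1) * (2 * F \<alpha> t) - (1 - 3 * t) / 2 * (2 * P)"
    unfolding G I J F[symmetric] by (simp add: m1)
  have "integral\<^sup>L UU (\<lambda>p. t / (t + 1)) \<le> integral\<^sup>L UU (\<lambda>p. ?f p + ?g p)"
    by (rule integral_mono_AE) (use fi gi pw in \<open>auto elim: eventually_mono\<close>)
  also have "\<dots> = integral\<^sup>L UU ?f + integral\<^sup>L UU ?g"
    using fi gi by (simp add: Bochner_Integration.integral_add)
  finally have b1: "t / (t + 1) \<le> 2 * F \<alpha> t"
    unfolding G F[symmetric] by (simp add: m1)
  have "(1/2) * t / (t + 1) = (1/2) * (t / (t + 1))" by simp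
  then have c1: "(1/2) * t / (t + 1) \<le> F \<alpha> t" using b1 by linarith
  have "t + (1 - 3 * t) * P / 2 \<le> (t + 1) * F \<alpha> t" 
  proof -
    have e1: "(t + 1) * (2 * F \<alpha> t) = 2 * ((t + 1) * F \<alpha> t)" by simp
    have e2: "(1 - 3 * t) / 2 * (2 * P) = (1 - 3 * t) * P" by simp
    show ?thesis using b2 unfolding e1 e2 by linarith
  qed
  then have c2: "(t + (1 - 3 * t) * P / 2) / (t + 1) \<le> F \<alpha> t"
    using t by (simp add: divide_le_eq mult.commute)
  show ?thesis using c1 c2 unfolding P_def A_def by simp
qed




lemma aln_sin: "(u::real) \<noteq> 0 \<Longrightarrow> ((\<lambda>a::real. a * ln \<bar>sin (a * u)\<bar>) \<longlongrightarrow> 0) (at_right 0)"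
proof -
  assume u: "u \<noteq> 0"
  have "\<bar>sin (a * u)\<bar> = \<bar>sin (a * \<bar>u\<bar>)\<bar>" for a :: real
  proof (cases "u \<ge> 0")
    case True then have "\<bar>u\<bar> = u" by simp
    then show ?thesis by simp
  next
    case False
    then have "\<bar>u\<bar> = - u" by simp
    then show ?thesis by simp
  qed
  moreover have "((\<lambda>a. a * ln (sin (a * \<bar>u\<bar>))) \<longlongrightarrow> 0) (at_right 0)"
    using u by real_asymp
  moreover have "\<forall>\<^sub>F a in at_right 0. a * ln (sin (a * \<bar>u\<bar>)) = a * ln \<bar>sin (a * \<bar>u\<bar>)\<bar>"
  proof -
    have "\<forall>\<^sub>F a in at_right 0. 0 < sin (a * \<bar>u\<bar>)" using u by real_asymp
    then show ?thesis by eventually_elim simp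
  qed
  ultimately show ?thesis by (simp add: tendsto_cong)
qed

lemma aln:
  assumes u: "u \<in> II" "u \<noteq> 0"
  shows "((\<lambda>a. a * ln \<bar>q a u\<bar>) \<longlongrightarrow> 0) (at_right 0)"
proof -
  have ev: "\<forall>\<^sub>F a in at_right 0. a * ln \<bar>q a u\<bar> = a * ln \<bar>sin (a * u)\<bar> - ln (cos u) + (1 - a) * ln (cos (u - a * u))"
  proof -
    have "\<forall>\<^sub>F a in at_right 0. 0 < a \<and> a < (1::real)"
      by (intro eventually_conj; real_asymp)
    then show ?thesis
    proof eventually_elim
      case (elim a)
      then have a: "0 < a" "a < 1" by auto
      have s: "sin (a * u) \<noteq> 0" using sin_ne0[OF a u(1) u(2)] .
      have c1: "0 < cos u" using cos_pos_I[OF u(1)] .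
      have c2: "0 < cos (u - a * u)" using cos_pos_I2[OF a u(1)] .
      have "\<bar>q a u\<bar> = \<bar>sin (a * u)\<bar> / cos u powr (1 / a) * cos (u - a * u) powr ((1 - a) / a)"
        using c1 c2 by (simp add: q_def abs_mult)
      then have L: "ln \<bar>q a u\<bar> = ln \<bar>sin (a * u)\<bar> - (1 / a) * ln (cos u) + ((1 - a) / a) * ln (cos (u - a * u))"
        using s c1 c2 by (simp add: ln_mult ln_div ln_powr)
      have "a * (ln \<bar>sin (a * u)\<bar> - (1 / a) * ln (cos u) + ((1 - a) / a) * ln (cos (u - a * u)))
          = a * ln \<bar>sin (a * u)\<bar> - ln (cos u) + (1 - a) * ln (cos (u - a * u))"
        using a by (simp add: field_simps)
      then show ?case unfolding L .
    qed
  qed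
  have lim: "((\<lambda>a. a * ln \<bar>sin (a * u)\<bar> - ln (cos u) + (1 - a) * ln (cos (u - a * u))) \<longlongrightarrow>
      0 - ln (cos u) + (1 - 0) * ln (cos (u - 0 * u))) (at_right 0)"
    using cos_pos_I[OF u(1)]
    by (intro tendsto_intros aln_sin u) auto
  show ?thesis using tendsto_cong[OF ev] lim by simp
qed

lemma Q_lim:
  assumes u: "u1 \<in> II" "u1 \<noteq> 0" "u2 \<in> II" "u2 \<noteq> 0"
  shows "((\<lambda>a. Q a u1 u2) \<longlongrightarrow> 1) (at_right 0)"
proof -
  have ev: "\<forall>\<^sub>F a in at_right 0. Q a u1 u2 = exp ((a * ln \<bar>q a u2\<bar> - a * ln \<bar>q a u1\<bar>) / (1 - a))"
  proof -
    have "\<forall>\<^sub>F a in at_right 0. 0 < a \<and> a < (1::real)"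
      by (intro eventually_conj; real_asymp)
    then show ?thesis
    proof eventually_elim
      case (elim a)
      then have a: "0 < a" "a < 1" by auto
      have n1: "q a u1 \<noteq> 0" by (rule q_ne0[OF a u(1,2)])
      have n2: "q a u2 \<noteq> 0" by (rule q_ne0[OF a u(3,4)])
      have "Q a u1 u2 = exp (a / (1 - a) * ln \<bar>q a u2 / q a u1\<bar>)"
        unfolding Q_def using n1 n2 by (simp add: powr_def)
      also have "a / (1 - a) * ln \<bar>q a u2 / q a u1\<bar> = (a * ln \<bar>q a u2\<bar> - a * ln \<bar>q a u1\<bar>) / (1 - a)"
        using n1 n2 by (simp add: abs_divide ln_div diff_divide_distrib right_diff_distrib)
      finally show ?case .
    qed
  qed
  have lim: "((\<lambda>a. exp ((a * ln \<bar>q a u2\<bar> - a * ln \<bar>q a u1\<bar>) / (1 - a))) \<longlongrightarrow> exp ((0 - 0) / (1 - 0))) (at_right 0)"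
    by (intro tendsto_intros aln u) auto
  show ?thesis using tendsto_cong[OF ev] lim by simp
qed


lemma F_lim:
  assumes t: "0 \<le> t"
  shows "((\<lambda>\<alpha>. F \<alpha> t) \<longlongrightarrow> t / (t + 1)) (at_right 0)"
proof -
  interpret U: prob_space UU by (rule ps_UU)
  have m1: "measure UU UNIV = 1" using U.prob_space by simp
  let ?s = "\<lambda>x p. t / (t + Q (inverse x) (fst p) (snd p))"
  have sm: "?s x \<in> borel_measurable UU" for x unfolding UU_def by measurable
  have bd: "norm (?s x p) \<le> 1" for x p using t Q_nonneg[of "inverse x" "fst p" "snd p"]
    by (cases "t = 0") (auto simp: divide_le_eq_1)
  have lim: "AE p in UU. ((\<lambda>x. ?s x p) \<longlongrightarrow> t / (t + 1)) at_top"
    using AE_UU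
  proof eventually_elim
    case (elim p)
    have e: "fst p \<in> II" "fst p \<noteq> 0" "snd p \<in> II" "snd p \<noteq> 0" using elim by auto
    have "((\<lambda>a. Q a (fst p) (snd p)) \<longlongrightarrow> 1) (at_right 0)" by (rule Q_lim[OF e])
    then have "((\<lambda>x. Q (inverse x) (fst p) (snd p)) \<longlongrightarrow> 1) at_top"
      by (subst (asm) filterlim_at_right_to_top) simp
    then show ?case using t by (intro tendsto_divide tendsto_const tendsto_add) auto
  qed
  have "((\<lambda>x. integral\<^sup>L UU (?s x)) \<longlongrightarrow> integral\<^sup>L UU (\<lambda>p. t / (t + 1))) at_top"
    apply (rule integral_dominated_convergence_at_top[where w="\<lambda>p. 1", OF _ sm _ lim])
      apply simp
     apply simp
    apply (intro always_eventually allI AE_I2 bd)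
    done
  then have I: "((\<lambda>x. integral\<^sup>L UU (?s x)) \<longlongrightarrow> t / (t + 1)) at_top" by (simp add: m1)
  have ev: "\<forall>\<^sub>F x in at_top. integral\<^sup>L UU (?s x) = F (inverse x) t"
  proof -
    have "\<forall>\<^sub>F x in at_top. (1::real) < x" by (rule eventually_gt_at_top)
    then show ?thesis
    proof eventually_elim
      case (elim x)
      then have "0 < inverse x" "inverse x < 1" by (auto simp: inverse_less_1_iff)
      then show ?case using F_integral[of "inverse x" t] t by simp
    qed
  qed
  have "((\<lambda>x. F (inverse x) t) \<longlongrightarrow> t / (t + 1)) at_top"
    using tendsto_cong[OF ev] I by simp
  then show ?thesis by (subst filterlim_at_right_to_top) simp
qed


theorem lemma1:
  shows "(\<forall>\<alpha> t. 0 < \<alpha> \<and> \<alpha> < 1 \<and> 0 \<le> t \<longrightarrow>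
      F \<alpha> t = (\<integral>p. t / (t + Q \<alpha> (fst p) (snd p)) \<partial>UU)
    \<and> F \<alpha> t \<ge> max ((1/2) * t / (t + 1))
          ((t + (1 - 3 * t) * measure UU {p \<in> space UU. Q \<alpha> (fst p) (snd p) \<le> t} / 2) / (t + 1)))
  \<and> (\<forall>\<alpha> t. 0 < \<alpha> \<and> \<alpha> < 1 \<and> 0 \<le> t \<and> t \<le> 1/3 \<longrightarrow> F \<alpha> t \<ge> t / (t + 1))
  \<and> (\<forall>t. 0 \<le> t \<longrightarrow> ((\<lambda>\<alpha>. F \<alpha> t) \<longlongrightarrow> t / (t + 1)) (at_right 0))"
proof (intro conjI allI impI)
  fix \<alpha> t :: real
  assume h: "0 < \<alpha> \<and> \<alpha> < 1 \<and> 0 \<le> t"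
  show "F \<alpha> t = (\<integral>p. t / (t + Q \<alpha> (fst p) (snd p)) \<partial>UU)"
    using F_integral h by auto
  show "F \<alpha> t \<ge> max ((1/2) * t / (t + 1))
          ((t + (1 - 3 * t) * measure UU {p \<in> space UU. Q \<alpha> (fst p) (snd p) \<le> t} / 2) / (t + 1))"
    using bounds h by auto
next
  fix \<alpha> t :: real
  assume h: "0 < \<alpha> \<and> \<alpha> < 1 \<and> 0 \<le> t \<and> t \<le> 1/3"
  define P where "P = measure UU {p \<in> space UU. Q \<alpha> (fst p) (snd p) \<le> t}"
  have b: "F \<alpha> t \<ge> max ((1/2) * t / (t + 1)) ((t + (1 - 3 * t) * P / 2) / (t + 1))"
    unfolding P_def using bounds h by auto
  have "0 \<le> (1 - 3 * t) * P / 2" using h by (simp add: P_def)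
  then have "t / (t + 1) \<le> (t + (1 - 3 * t) * P / 2) / (t + 1)"
    using h by (intro divide_right_mono) auto
  then show "F \<alpha> t \<ge> t / (t + 1)" using b by linarith
next
  fix t :: real
  assume "0 \<le> t"
  then show "((\<lambda>\<alpha>. F \<alpha> t) \<longlongrightarrow> t / (t + 1)) (at_right 0)" by (rule F_lim)
qed

end
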